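(* Let $m\in\mathbb{N}$. If $S\subseteq\mathbb{N}^{\mathbb{N}}$ is in $\mathbf{\Delta}'_{m+2}$, then $S$ is $m$th-order guessable.
   Context: Baire space $\mathbb{N}^{\mathbb{N}}$ carries the product of discrete topologies; $\mathbf{\Sigma}^0_n,\mathbf{\Pi}^0_n,\mathbf{\Delta}^0_n$ are the boldface Borel pointclasses. Definition: $\mathbf{\Delta}'_2=\mathbf{\Delta}^0_2$; for $k>2$, $S\in\mathbf{\Delta}'_k$ iff $S$ is a countable union of countable intersections of $\mathbf{\Delta}^0_{k-2}$ sets and also a countable intersection of countable unions of $\mathbf{\Delta}^0_{k-2}$ sets. The language $\mathscr{L}_{\max}$ is the first-order language (with equality) having: a constant symbol $\overline{n}$ for each $n\in\mathbb{N}$; an $n$-ary function symbol $\tilde w$ for each $w:\mathbb{N}^n\to\mathbb{N}$; an $n$-ary predicate symbol $\tilde p$ for each $p\subseteq\mathbb{N}^n$; a special unary function symbol $\mathbf{f}$; and, for every $n$ and every $G:\mathbb{N}^n\times\mathbb{N}^{<\mathbb{N}}\to\mathbb{N}$, an $(n+1)$-ary function symbol $G\circ\mathbf{f}$. For $f\in\mathbb{N}^{\mathbb{N}}$, $\mathscr{M}_f$ is the structure with universe $\mathbb{N}$ interpreting $\overline n$ as $n$, $\tilde w$ as $w$, $\tilde p$ as $p$, $\mathbf f$ as $f$, and $G\circ\mathbf f$ as $(m_1,\dots,m_n,m)\mapsto G(m_1,\dots,m_n,f(0),\dots,f(m))$. For a sentence $\phi$, $f(\phi)=1$ if $\mathscr{M}_f\models\phi$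 and $f(\phi)=0$ otherwise. Formula classes: "quantifier-free" means containing no quantifiers at all (not even bounded ones). $\Sigma_0=\Pi_0=\Delta_0$ is the set of quantifier-free formulas; $\Sigma_{n+1}=\{\exists x\,\phi:\phi\in\Pi_n\}$ and $\Pi_{n+1}=\{\forall x\,\phi:\phi\in\Sigma_n\}$; a formula is $\Delta_{n+1}$ if it is equivalent, in every structure $\mathscr{M}_f$ ($f\in\mathbb{N}^{\mathbb{N}}$), to some $\Sigma_{n+1}$ formula of $\mathscr{L}_{\max}$ and also to some $\Pi_{n+1}$ formula of $\mathscr{L}_{\max}$. For a set $\Sigma$ of symbols of $\mathscr{L}_{\max}$, a sentence "of $\mathscr{L}_{\max}\cap\Sigma$" is an $\mathscr{L}_{\max}$-sentence all of whose non-logical symbols lie in $\Sigma$. Definition ($m$th-order guessable): $S\subseteq\mathbb{N}^{\mathbb{N}}$ is $m$th-order guessable if there exist a countable set $\Sigma$ of $\mathscr{L}_{\max}$-symbols, a listing $\phi_0,\phi_1,\dots$ of all $\Delta_m$ sentences of $\mathscr{L}_{\max}\cap\Sigma$, and a function $G:\{0,1\}^{<\mathbb{N}}\to\mathbb{N}$ such that for every $f:\mathbb{N}\to\mathbb{N}$, $\lim_{n\to\infty}G(f(\phi_0),\dots,f(\phi_n))$ equals $1$ if $f\in S$ and $0$ if $f\notin S$. *)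

theory Defs
  imports "HOL-Analysis.Analysis"
begin

text \<open>bSigma n is the boldface class Sigma^0_n (meaningful for n >= 1).\<close>
fun bSigma :: "nat \<Rightarrow> (nat \<Rightarrow> nat) set set" where
  "bSigma 0 = {}"
| "bSigma (Suc 0) = {S. open S}"
| "bSigma (Suc (Suc n)) =
     {(\<Union>i::nat. - A i) | A. \<forall>i. A i \<in> bSigma (Suc n)}"

definition bPi :: "nat \<Rightarrow> (nat \<Rightarrow> nat) set set" where
  "bPi n = {- S | S. S \<in> bSigma n}"

definition bDelta :: "nat \<Rightarrow> (nat \<Rightarrow> nat) set set" where
  "bDelta n = bSigma n \<inter> bPi n"

text \<open>The class Delta'_k (meaningful for k >= 2).\<close>
definition DeltaP :: "nat \<Rightarrow> (nat \<Rightarrow> nat) set set" where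
  "DeltaP k = (if k \<le> 2 then bDelta 2 else
     {S. (\<exists>A. (\<forall>i j. A i j \<in> bDelta (k - 2)) \<and> S = (\<Union>i::nat. \<Inter>j::nat. A i j))
       \<and> (\<exists>B. (\<forall>i j. B i j \<in> bDelta (k - 2)) \<and> S = (\<Inter>i::nat. \<Union>j::nat. B i j))})"

text \<open>An n-ary function w : N^n -> N is represented by a function on
  lists that is canonical (0 off lists of length n); likewise predicates (False off arity n)
  and the symbols G o f (G xs ys = 0 when length xs ~= n).\<close>
datatype sym =
    SConst nat
  | SFun nat "nat list \<Rightarrow> nat"
  | SPred nat "nat list \<Rightarrow> bool"
  | SF
  | SGF nat "nat list \<Rightarrow> nat list \<Rightarrow> nat"

datatype trm =
    Var nat
  | Cst nat
  | App nat "nat list \<Rightarrow> nat" "trm list"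
  | FApp trm
  | GApp nat "nat list \<Rightarrow> nat list \<Rightarrow> nat" "trm list" trm

datatype fml =
    Eq trm trm
  | PredA nat "nat list \<Rightarrow> bool" "trm list"
  | Neg fml
  | Conj fml fml
  | Disj fml fml
  | Imp fml fml
  | Ex nat fml
  | All nat fml

fun wf_trm :: "trm \<Rightarrow> bool" where
  "wf_trm (Var x) = True"
| "wf_trm (Cst n) = True"
| "wf_trm (App n w ts) = (length ts = n \<and> (\<forall>xs. length xs \<noteq> n \<longrightarrow> w xs = 0)
      \<and> (\<forall>t\<in>set ts. wf_trm t))"
| "wf_trm (FApp t) = wf_trm t"
| "wf_trm (GApp n G ts t) = (length ts = n \<and> (\<forall>xs ys. length xs \<noteq> n \<longrightarrow> G xs ys = 0)
      \<and> (\<forall>s\<in>set ts. wf_trm s) \<and> wf_trm t)"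

fun wf_fml :: "fml \<Rightarrow> bool" where
  "wf_fml (Eq s t) = (wf_trm s \<and> wf_trm t)"
| "wf_fml (PredA n p ts) = (length ts = n \<and> (\<forall>xs. length xs \<noteq> n \<longrightarrow> \<not> p xs)
      \<and> (\<forall>t\<in>set ts. wf_trm t))"
| "wf_fml (Neg \<phi>) = wf_fml \<phi>"
| "wf_fml (Conj \<phi> \<psi>) = (wf_fml \<phi> \<and> wf_fml \<psi>)"
| "wf_fml (Disj \<phi> \<psi>) = (wf_fml \<phi> \<and> wf_fml \<psi>)"
| "wf_fml (Imp \<phi> \<psi>) = (wf_fml \<phi> \<and> wf_fml \<psi>)"
| "wf_fml (Ex x \<phi>) = wf_fml \<phi>"
| "wf_fml (All x \<phi>) = wf_fml \<phi>"

fun fv_trm :: "trm \<Rightarrow> nat set" where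
  "fv_trm (Var x) = {x}"
| "fv_trm (Cst n) = {}"
| "fv_trm (App n w ts) = \<Union> (set (map fv_trm ts))"
| "fv_trm (FApp t) = fv_trm t"
| "fv_trm (GApp n G ts t) = \<Union> (set (map fv_trm ts)) \<union> fv_trm t"

fun fv_fml :: "fml \<Rightarrow> nat set" where
  "fv_fml (Eq s t) = fv_trm s \<union> fv_trm t"
| "fv_fml (PredA n p ts) = \<Union> (set (map fv_trm ts))"
| "fv_fml (Neg \<phi>) = fv_fml \<phi>"
| "fv_fml (Conj \<phi> \<psi>) = fv_fml \<phi> \<union> fv_fml \<psi>"
| "fv_fml (Disj \<phi> \<psi>) = fv_fml \<phi> \<union> fv_fml \<psi>"
| "fv_fml (Imp \<phi> \<psi>) = fv_fml \<phi> \<union> fv_fml \<psi>"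
| "fv_fml (Ex x \<phi>) = fv_fml \<phi> - {x}"
| "fv_fml (All x \<phi>) = fv_fml \<phi> - {x}"

fun syms_trm :: "trm \<Rightarrow> sym set" where
  "syms_trm (Var x) = {}"
| "syms_trm (Cst n) = {SConst n}"
| "syms_trm (App n w ts) = insert (SFun n w) (\<Union> (set (map syms_trm ts)))"
| "syms_trm (FApp t) = insert SF (syms_trm t)"
| "syms_trm (GApp n G ts t) = insert (SGF n G) (\<Union> (set (map syms_trm ts)) \<union> syms_trm t)"

fun syms_fml :: "fml \<Rightarrow> sym set" where
  "syms_fml (Eq s t) = syms_trm s \<union> syms_trm t"
| "syms_fml (PredA n p ts) = insert (SPred n p) (\<Union> (set (map syms_trm ts)))"
| "syms_fml (Neg \<phi>) = syms_fml \<phi>"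
| "syms_fml (Conj \<phi> \<psi>) = syms_fml \<phi> \<union> syms_fml \<psi>"
| "syms_fml (Disj \<phi> \<psi>) = syms_fml \<phi> \<union> syms_fml \<psi>"
| "syms_fml (Imp \<phi> \<psi>) = syms_fml \<phi> \<union> syms_fml \<psi>"
| "syms_fml (Ex x \<phi>) = syms_fml \<phi>"
| "syms_fml (All x \<phi>) = syms_fml \<phi>"

definition sentence :: "fml \<Rightarrow> bool" where
  "sentence \<phi> \<longleftrightarrow> wf_fml \<phi> \<and> fv_fml \<phi> = {}"

fun eval :: "(nat \<Rightarrow> nat) \<Rightarrow> (nat \<Rightarrow> nat) \<Rightarrow> trm \<Rightarrow> nat" where
  "eval f e (Var x) = e x"
| "eval f e (Cst n) = n"
| "eval f e (App n w ts) = w (map (eval f e) ts)"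
| "eval f e (FApp t) = f (eval f e t)"
| "eval f e (GApp n G ts t) = G (map (eval f e) ts) (map f [0..<Suc (eval f e t)])"

fun sat :: "(nat \<Rightarrow> nat) \<Rightarrow> (nat \<Rightarrow> nat) \<Rightarrow> fml \<Rightarrow> bool" where
  "sat f e (Eq s t) = (eval f e s = eval f e t)"
| "sat f e (PredA n p ts) = p (map (eval f e) ts)"
| "sat f e (Neg \<phi>) = (\<not> sat f e \<phi>)"
| "sat f e (Conj \<phi> \<psi>) = (sat f e \<phi> \<and> sat f e \<psi>)"
| "sat f e (Disj \<phi> \<psi>) = (sat f e \<phi> \<or> sat f e \<psi>)"
| "sat f e (Imp \<phi> \<psi>) = (sat f e \<phi> \<longrightarrow> sat f e \<psi>)"
| "sat f e (Ex x \<phi>) = (\<exists>n. sat f (e(x := n)) \<phi>)"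
| "sat f e (All x \<phi>) = (\<forall>n. sat f (e(x := n)) \<phi>)"

text \<open>f(phi) for a sentence phi (the valuation is irrelevant for sentences).\<close>
definition fval :: "(nat \<Rightarrow> nat) \<Rightarrow> fml \<Rightarrow> bool" where
  "fval f \<phi> = sat f (\<lambda>_. 0) \<phi>"

fun qfree :: "fml \<Rightarrow> bool" where
  "qfree (Eq s t) = True"
| "qfree (PredA n p ts) = True"
| "qfree (Neg \<phi>) = qfree \<phi>"
| "qfree (Conj \<phi> \<psi>) = (qfree \<phi> \<and> qfree \<psi>)"
| "qfree (Disj \<phi> \<psi>) = (qfree \<phi> \<and> qfree \<psi>)"
| "qfree (Imp \<phi> \<psi>) = (qfree \<phi> \<and> qfree \<psi>)"
| "qfree (Ex x \<phi>) = False"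
| "qfree (All x \<phi>) = False"

fun SigmaF :: "nat \<Rightarrow> fml \<Rightarrow> bool" and PiF :: "nat \<Rightarrow> fml \<Rightarrow> bool" where
  "SigmaF 0 \<phi> = qfree \<phi>"
| "PiF 0 \<phi> = qfree \<phi>"
| "SigmaF (Suc n) \<phi> = (\<exists>x \<psi>. \<phi> = Ex x \<psi> \<and> PiF n \<psi>)"
| "PiF (Suc n) \<phi> = (\<exists>x \<psi>. \<phi> = All x \<psi> \<and> SigmaF n \<psi>)"

definition fml_equiv :: "fml \<Rightarrow> fml \<Rightarrow> bool" where
  "fml_equiv \<phi> \<psi> \<longleftrightarrow> (\<forall>f e. sat f e \<phi> = sat f e \<psi>)"

fun DeltaF :: "nat \<Rightarrow> fml \<Rightarrow> bool" where
  "DeltaF 0 \<phi> = qfree \<phi>"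
| "DeltaF (Suc n) \<phi> =
     ((\<exists>\<psi>. wf_fml \<psi> \<and> SigmaF (Suc n) \<psi> \<and> fml_equiv \<phi> \<psi>)
    \<and> (\<exists>\<psi>. wf_fml \<psi> \<and> PiF (Suc n) \<psi> \<and> fml_equiv \<phi> \<psi>))"

definition guessable :: "nat \<Rightarrow> (nat \<Rightarrow> nat) set \<Rightarrow> bool" where
  "guessable m S \<longleftrightarrow>
     (\<exists>(Sig :: sym set) (\<phi> :: nat \<Rightarrow> fml) (G :: bool list \<Rightarrow> nat).
        countable Sig
      \<and> range \<phi> = {\<psi>. sentence \<psi> \<and> DeltaF m \<psi> \<and> syms_fml \<psi> \<subseteq> Sig}
      \<and> (\<forall>f. (\<lambda>n. G (map (\<lambda>i. fval f (\<phi> i)) [0..<Suc n]))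
               \<longlonglongrightarrow> (if f \<in> S then 1 else 0)))"

end

theory Submission imports Defs begin

definition cyl :: "nat list \<Rightarrow> (nat \<Rightarrow> nat) set" where
  "cyl ys = {g. \<forall>i<length ys. g i = ys ! i}"

lemma open_cyl:
  fixes A :: "(nat \<Rightarrow> nat) set"
  assumes "open A" "f \<in> A"
  shows "\<exists>N. \<forall>g. (\<forall>i<N. g i = f i) \<longrightarrow> g \<in> A"
proof -
  have "openin (product_topology (\<lambda>i. euclidean) UNIV) A" using assms unfolding open_fun_def by auto
  from product_topology_open_contains_basis[OF this assms(2)]
  obtain X where H: "f \<in> (\<Pi>\<^sub>E i\<in>UNIV. X i)" "finite {i. X i \<noteq> UNIV}" "(\<Pi>\<^sub>E i\<in>UNIV. X i) \<subseteq> A"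
    by auto
  define N where "N = Suc (\<Sum>{i. X i \<noteq> UNIV})"
  have lt: "i < N" if "X i \<noteq> UNIV" for i
  proof -
    have "i \<le> \<Sum>{i. X i \<noteq> UNIV}" using member_le_sum[of i "{i. X i \<noteq> UNIV}" "\<lambda>x. x"] H(2) that by auto
    then show ?thesis unfolding N_def by simp
  qed
  show ?thesis
  proof (intro exI allI impI)
    fix g assume g: "\<forall>i<N. g i = f i"
    have "g \<in> (\<Pi>\<^sub>E i\<in>UNIV. X i)"
    proof -
      have "g i \<in> X i" for i
      proof (cases "X i = UNIV")
        case False then show ?thesis using g lt[OF False] H(1) by auto
      qed auto
      then show ?thesis by auto
    qed
    then show "g \<in> A" using H(3) by auto
  qed
qed

lemma open_iff_cyl:
  fixes A :: "(nat \<Rightarrow> nat) set"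
  assumes "open A"
  shows "f \<in> A \<longleftrightarrow> (\<exists>y. cyl (map f [0..<Suc y]) \<subseteq> A)"
proof
  assume "f \<in> A"
  then obtain N where N: "\<forall>g. (\<forall>i<N. g i = f i) \<longrightarrow> g \<in> A" using open_cyl assms by blast
  have "cyl (map f [0..<Suc N]) \<subseteq> A"
    unfolding cyl_def using N by (auto simp del: upt_Suc simp: nth_map)
  then show "\<exists>y. cyl (map f [0..<Suc y]) \<subseteq> A" by blast
next
  assume "\<exists>y. cyl (map f [0..<Suc y]) \<subseteq> A"
  then obtain y where "cyl (map f [0..<Suc y]) \<subseteq> A" by blast
  moreover have "f \<in> cyl (map f [0..<Suc y])" unfolding cyl_def by (auto simp del: upt_Suc)
  ultimately show "f \<in> A" by blast
qed

fun dual :: "fml \<Rightarrow> fml" where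
  "dual (Ex x \<phi>) = All x (dual \<phi>)"
| "dual (All x \<phi>) = Ex x (dual \<phi>)"
| "dual \<phi> = Neg \<phi>"

lemma sat_dual: "sat f e (dual \<phi>) = (\<not> sat f e \<phi>)"
  by (induction \<phi> arbitrary: e rule: dual.induct) auto

lemma wf_dual: "wf_fml (dual \<phi>) = wf_fml \<phi>"
  by (induction \<phi> rule: dual.induct) auto

lemma fv_dual: "fv_fml (dual \<phi>) = fv_fml \<phi>"
  by (induction \<phi> rule: dual.induct) auto

lemma SigmaPi_dual: "(SigmaF n \<phi> \<longrightarrow> PiF n (dual \<phi>)) \<and> (PiF n \<phi> \<longrightarrow> SigmaF n (dual \<phi>))"
proof (induction n arbitrary: \<phi>)
  case 0
  then show ?case by (cases \<phi>) auto
next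
  case (Suc n)
  then show ?case by auto
qed

lemma map_upd_last: "map (e(k := i)) [0..<Suc k] = map e [0..<k] @ [i]"
  by auto

lemma sigma_family:
  "\<forall>A k. (\<forall>ps. A ps \<in> bSigma (Suc n)) \<longrightarrow>
     (\<exists>\<psi>. wf_fml \<psi> \<and> SigmaF (Suc n) \<psi> \<and> fv_fml \<psi> \<subseteq> {..<k} \<and>
        (\<forall>f e. sat f e \<psi> \<longleftrightarrow> f \<in> A (map e [0..<k])))"
proof (induction n)
  case 0
  show ?case
  proof (intro allI impI)
    fix A :: "nat list \<Rightarrow> (nat \<Rightarrow> nat) set" and k :: nat
    assume op: "\<forall>ps. A ps \<in> bSigma (Suc 0)"
    define G where "G = (\<lambda>xs ys. if length xs = k \<and> cyl ys \<subseteq> A xs then 1 else (0::nat))"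
    define \<psi> where "\<psi> = Ex k (Eq (GApp k G (map Var [0..<k]) (Var k)) (Cst 1))"
    have "wf_fml \<psi>" unfolding \<psi>_def G_def by auto
    moreover have "SigmaF (Suc 0) \<psi>" unfolding \<psi>_def by auto
    moreover have "fv_fml \<psi> \<subseteq> {..<k}" unfolding \<psi>_def by auto
    moreover have "sat f e \<psi> \<longleftrightarrow> f \<in> A (map e [0..<k])" for f e
    proof -
      have m: "map (eval f (e(k := n))) (map Var [0..<k]) = map e [0..<k]" for n by auto
      have "sat f e \<psi> \<longleftrightarrow> (\<exists>n. cyl (map f [0..<Suc n]) \<subseteq> A (map e [0..<k]))"
        unfolding \<psi>_def G_def by (simp only: sat.simps eval.simps m) (auto simp del: upt_Suc)
      also have "\<dots> \<longleftrightarrow> f \<in> A (map e [0..<k])"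
        using open_iff_cyl op by auto
      finally show ?thesis .
    qed
    ultimately show "\<exists>\<psi>. wf_fml \<psi> \<and> SigmaF (Suc 0) \<psi> \<and> fv_fml \<psi> \<subseteq> {..<k} \<and>
        (\<forall>f e. sat f e \<psi> \<longleftrightarrow> f \<in> A (map e [0..<k]))" by blast
  qed
next
  case (Suc n)
  show ?case
  proof (intro allI impI)
    fix A :: "nat list \<Rightarrow> (nat \<Rightarrow> nat) set" and k :: nat
    assume hA: "\<forall>ps. A ps \<in> bSigma (Suc (Suc n))"
    have "\<forall>ps. \<exists>B. (\<forall>i::nat. B i \<in> bSigma (Suc n)) \<and> A ps = (\<Union>i::nat. - B i)"
    proof
      fix ps
      have "A ps \<in> bSigma (Suc (Suc n))" using hA by blast
      then obtain C where C: "A ps = (\<Union>i::nat. - C i) \<and> (\<forall>i::nat. C i \<in> bSigma (Suc n))"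
        by (simp only: bSigma.simps mem_Collect_eq) (metis (no_types))
      then show "\<exists>B. (\<forall>i::nat. B i \<in> bSigma (Suc n)) \<and> A ps = (\<Union>i::nat. - B i)" by (intro exI[of _ C]) (use C in blast)
    qed
    then obtain B where B: "\<And>ps i. B ps i \<in> bSigma (Suc n)" "\<And>ps. A ps = (\<Union>i::nat. - B ps i)"
      by metis
    define A' where "A' = (\<lambda>qs. B (butlast qs) (last qs))"
    have "\<forall>ps. A' ps \<in> bSigma (Suc n)" unfolding A'_def using B by auto
    then obtain \<psi> where \<psi>: "wf_fml \<psi>" "SigmaF (Suc n) \<psi>" "fv_fml \<psi> \<subseteq> {..<Suc k}"
       "\<forall>f e. sat f e \<psi> \<longleftrightarrow> f \<in> A' (map e [0..<Suc k])"
      using Suc.IH by blast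
    define \<theta> where "\<theta> = Ex k (dual \<psi>)"
    have "wf_fml \<theta>" unfolding \<theta>_def using \<psi> wf_dual by auto
    moreover have "SigmaF (Suc (Suc n)) \<theta>" unfolding \<theta>_def using \<psi> SigmaPi_dual by auto
    moreover have "fv_fml \<theta> \<subseteq> {..<k}" unfolding \<theta>_def using \<psi> fv_dual by auto
    moreover have "sat f e \<theta> \<longleftrightarrow> f \<in> A (map e [0..<k])" for f e
    proof -
      have "sat f e \<theta> \<longleftrightarrow> (\<exists>i. f \<notin> A' (map e [0..<k] @ [i]))"
        unfolding \<theta>_def using \<psi>(4) sat_dual map_upd_last by (simp only: sat.simps sat_dual \<psi>(4) map_upd_last simp_thms)
      also have "\<dots> \<longleftrightarrow> f \<in> A (map e [0..<k])" unfolding A'_def B(2) by simp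
      finally show ?thesis .
    qed
    ultimately show "\<exists>\<psi>. wf_fml \<psi> \<and> SigmaF (Suc (Suc n)) \<psi> \<and> fv_fml \<psi> \<subseteq> {..<k} \<and>
        (\<forall>f e. sat f e \<psi> \<longleftrightarrow> f \<in> A (map e [0..<k]))" by blast
  qed
qed


lemma finite_syms_trm: "finite (syms_trm t)"
  by (induction t) auto

lemma finite_syms_fml: "finite (syms_fml \<phi>)"
  by (induction \<phi>) (auto simp: finite_syms_trm)

datatype ctrm = CV nat | CC nat | CA nat "ctrm list" | CF ctrm | CG nat "ctrm list" ctrm
datatype cfml = CEq ctrm ctrm | CP nat "ctrm list" | CN cfml | CCj cfml cfml | CDj cfml cfml
  | CIm cfml cfml | CE nat cfml | CAl nat cfml

instance ctrm :: countable by countable_datatype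
instance cfml :: countable by countable_datatype

fun enc_t :: "sym set \<Rightarrow> trm \<Rightarrow> ctrm" where
  "enc_t Sg (Var x) = CV x"
| "enc_t Sg (Cst n) = CC n"
| "enc_t Sg (App n w ts) = CA (to_nat_on Sg (SFun n w)) (map (enc_t Sg) ts)"
| "enc_t Sg (FApp t) = CF (enc_t Sg t)"
| "enc_t Sg (GApp n G ts t) = CG (to_nat_on Sg (SGF n G)) (map (enc_t Sg) ts) (enc_t Sg t)"

fun dec_t :: "sym set \<Rightarrow> ctrm \<Rightarrow> trm" where
  "dec_t Sg (CV x) = Var x"
| "dec_t Sg (CC n) = Cst n"
| "dec_t Sg (CA c ts) = (case from_nat_into Sg c of SFun n w \<Rightarrow> App n w (map (dec_t Sg) ts) | _ \<Rightarrow> Var 0)"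
| "dec_t Sg (CF t) = FApp (dec_t Sg t)"
| "dec_t Sg (CG c ts t) = (case from_nat_into Sg c of SGF n G \<Rightarrow> GApp n G (map (dec_t Sg) ts) (dec_t Sg t) | _ \<Rightarrow> Var 0)"

fun enc_f :: "sym set \<Rightarrow> fml \<Rightarrow> cfml" where
  "enc_f Sg (Eq s t) = CEq (enc_t Sg s) (enc_t Sg t)"
| "enc_f Sg (PredA n p ts) = CP (to_nat_on Sg (SPred n p)) (map (enc_t Sg) ts)"
| "enc_f Sg (Neg \<phi>) = CN (enc_f Sg \<phi>)"
| "enc_f Sg (Conj \<phi> \<psi>) = CCj (enc_f Sg \<phi>) (enc_f Sg \<psi>)"
| "enc_f Sg (Disj \<phi> \<psi>) = CDj (enc_f Sg \<phi>) (enc_f Sg \<psi>)"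
| "enc_f Sg (Imp \<phi> \<psi>) = CIm (enc_f Sg \<phi>) (enc_f Sg \<psi>)"
| "enc_f Sg (Ex x \<phi>) = CE x (enc_f Sg \<phi>)"
| "enc_f Sg (All x \<phi>) = CAl x (enc_f Sg \<phi>)"

fun dec_f :: "sym set \<Rightarrow> cfml \<Rightarrow> fml" where
  "dec_f Sg (CEq s t) = Eq (dec_t Sg s) (dec_t Sg t)"
| "dec_f Sg (CP c ts) = (case from_nat_into Sg c of SPred n p \<Rightarrow> PredA n p (map (dec_t Sg) ts) | _ \<Rightarrow> Eq (Var 0) (Var 0))"
| "dec_f Sg (CN \<phi>) = Neg (dec_f Sg \<phi>)"
| "dec_f Sg (CCj \<phi> \<psi>) = Conj (dec_f Sg \<phi>) (dec_f Sg \<psi>)"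
| "dec_f Sg (CDj \<phi> \<psi>) = Disj (dec_f Sg \<phi>) (dec_f Sg \<psi>)"
| "dec_f Sg (CIm \<phi> \<psi>) = Imp (dec_f Sg \<phi>) (dec_f Sg \<psi>)"
| "dec_f Sg (CE x \<phi>) = Ex x (dec_f Sg \<phi>)"
| "dec_f Sg (CAl x \<phi>) = All x (dec_f Sg \<phi>)"

lemma dec_enc_t: "countable Sg \<Longrightarrow> syms_trm t \<subseteq> Sg \<Longrightarrow> dec_t Sg (enc_t Sg t) = t"
  by (induction t) (auto intro!: map_idI simp: UN_subset_iff)

lemma dec_enc_f: "countable Sg \<Longrightarrow> syms_fml \<phi> \<subseteq> Sg \<Longrightarrow> dec_f Sg (enc_f Sg \<phi>) = \<phi>"
  by (induction \<phi>) (auto simp: dec_enc_t UN_subset_iff intro!: map_idI)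

lemma countable_fmls: "countable Sg \<Longrightarrow> countable {\<phi>. syms_fml \<phi> \<subseteq> Sg}"
proof -
  assume c: "countable Sg"
  have "{\<phi>. syms_fml \<phi> \<subseteq> Sg} \<subseteq> range (dec_f Sg)"
    using dec_enc_f[OF c] by (metis (mono_tags) mem_Collect_eq rangeI subsetI)
  then show ?thesis by (rule countable_subset) auto
qed

lemma nth_prefix: "p < Suc n \<Longrightarrow> map g [0..<Suc n] ! p = g p"
  by (simp only: nth_map length_upt) (simp del: upt_Suc)

lemma guess_abstract:
  fixes \<alpha> \<beta> :: "nat \<Rightarrow> nat \<Rightarrow> fml"
  assumes sa: "\<And>i j. sentence (\<alpha> i j) \<and> DeltaF m (\<alpha> i j)"
    and sb: "\<And>i j. sentence (\<beta> i j) \<and> DeltaF m (\<beta> i j)"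
    and inS: "\<And>f. f \<in> S \<longleftrightarrow> (\<exists>i. \<forall>j. fval f (\<alpha> i j))"
    and notS: "\<And>f. f \<notin> S \<longleftrightarrow> (\<exists>i. \<forall>j. fval f (\<beta> i j))"
  shows "guessable m S"
proof -
  define d where "d k j = (if even k then \<alpha> (k div 2) j else \<beta> (k div 2) j)" for k j
  define Sig where "Sig = (\<Union>k. \<Union>j. syms_fml (d k j))"
  have cSig: "countable Sig" unfolding Sig_def using finite_syms_fml countable_finite by blast
  define D where "D = {\<psi>. sentence \<psi> \<and> DeltaF m \<psi> \<and> syms_fml \<psi> \<subseteq> Sig}"
  have dD: "d k j \<in> D" for k j
  proof -
    have "syms_fml (d k j) \<subseteq> Sig" unfolding Sig_def by blast
    moreover have "sentence (d k j) \<and> DeltaF m (d k j)" using sa sb by (simp add: d_def)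
    ultimately show ?thesis unfolding D_def by blast
  qed
  have neD: "D \<noteq> {}" using dD by blast
  have cD: "countable D"
    using countable_fmls[OF cSig] unfolding D_def by (rule countable_subset[rotated]) auto
  define \<phi> where "\<phi> = from_nat_into D"
  have rng: "range \<phi> = D" unfolding \<phi>_def using neD cD by simp
  define pos where "pos k j = to_nat_on D (d k j)" for k j
  have phipos: "\<phi> (pos k j) = d k j" for k j
    unfolding \<phi>_def pos_def using cD dD by simp
  define ok where "ok bs k = (\<forall>j. pos k j < length bs \<longrightarrow> bs ! pos k j)" for bs :: "bool list" and k
  define G where "G bs = (if \<exists>k<length bs. ok bs k then (if even (LEAST k. ok bs k) then 1 else 0) else (0::nat))" for bs
  have conv: "(\<lambda>n. G (map (\<lambda>i. fval f (\<phi> i)) [0..<Suc n])) \<longlonglongrightarrow> (if f \<in> S then 1 else 0)" for f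
  proof -
    define P where "P k = (\<forall>j. fval f (d k j))" for k
    have exP: "\<exists>k. P k"
    proof (cases "f \<in> S")
      case True
      then obtain i where "\<forall>j. fval f (\<alpha> i j)" using inS by blast
      then have "P (2*i)" unfolding P_def d_def by simp
      then show ?thesis by blast
    next
      case False
      then obtain i where "\<forall>j. fval f (\<beta> i j)" using notS by blast
      then have "P (2*i+1)" unfolding P_def d_def by simp
      then show ?thesis by blast
    qed
    define k0 where "k0 = (LEAST k. P k)"
    have Pk0: "P k0" unfolding k0_def using exP by (metis LeastI)
    have nP: "\<not> P k" if "k < k0" for k unfolding k0_def using that not_less_Least k0_def by blast
    have tgt: "(if even k0 then 1 else 0) = (if f \<in> S then 1 else (0::nat))"
    proof (cases "even k0")
      case True
      then have "\<forall>j. fval f (\<alpha> (k0 div 2) j)" using Pk0 unfolding P_def d_def by simp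
      then have "f \<in> S" using inS by blast
      then show ?thesis using True by simp
    next
      case False
      then have "\<forall>j. fval f (\<beta> (k0 div 2) j)" using Pk0 unfolding P_def d_def by simp
      then have "f \<notin> S" using notS by blast
      then show ?thesis using False by simp
    qed
    have "\<forall>k. \<exists>j. k < k0 \<longrightarrow> \<not> fval f (d k j)" using nP unfolding P_def by blast
    then obtain jj where jj: "\<And>k. k < k0 \<Longrightarrow> \<not> fval f (d k (jj k))" by metis
    define N where "N = k0 + (\<Sum>k<k0. pos k (jj k))"
    have ev: "G (map (\<lambda>i. fval f (\<phi> i)) [0..<Suc n]) = (if even k0 then 1 else 0)" if "n \<ge> N" for n
    proof -
      define bs where "bs = map (\<lambda>i. fval f (\<phi> i)) [0..<Suc n]"
      have lb: "length bs = Suc n" unfolding bs_def by simp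
      have nb: "p < Suc n \<Longrightarrow> bs ! p = fval f (\<phi> p)" for p unfolding bs_def by (rule nth_prefix)
      have ok0: "ok bs k0" unfolding ok_def lb using nb phipos Pk0 P_def by auto
      have nok: "\<not> ok bs k" if "k < k0" for k
      proof -
        have "pos k (jj k) \<le> (\<Sum>k<k0. pos k (jj k))"
          using member_le_sum[of k "{..<k0}" "\<lambda>k. pos k (jj k)"] that by simp
        then have lt: "pos k (jj k) < Suc n" using \<open>n \<ge> N\<close> unfolding N_def by simp
        then have "\<not> bs ! pos k (jj k)" using nb phipos jj[OF that] by simp
        then show ?thesis unfolding ok_def lb using lt by blast
      qed
      have k0lt: "k0 < length bs" using \<open>n \<ge> N\<close> lb unfolding N_def by simp
      have L: "(LEAST k. ok bs k) = k0"
        by (rule Least_equality) (use ok0 nok not_less in auto)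
      show ?thesis unfolding bs_def[symmetric] G_def L using ok0 k0lt by auto
    qed
    show ?thesis
      apply (rule tendsto_eventually)
      unfolding eventually_sequentially tgt[symmetric] using ev by blast
  qed
  show ?thesis unfolding guessable_def
    apply (rule exI[of _ Sig], rule exI[of _ \<phi>], rule exI[of _ G])
    using cSig rng conv unfolding D_def by blast
qed


lemma bDelta_compl: "C \<in> bDelta n \<Longrightarrow> - C \<in> bDelta n"
  unfolding bDelta_def bPi_def by auto

lemma sigma_sentence:
  assumes "C \<in> bSigma (Suc n)"
  shows "\<exists>\<sigma>. wf_fml \<sigma> \<and> SigmaF (Suc n) \<sigma> \<and> fv_fml \<sigma> = {} \<and> (\<forall>f e. sat f e \<sigma> \<longleftrightarrow> f \<in> C)"
proof -
  have "\<forall>ps. (\<lambda>_::nat list. C) ps \<in> bSigma (Suc n)" using assms by simp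
  then obtain \<sigma> where "wf_fml \<sigma>" "SigmaF (Suc n) \<sigma>" "fv_fml \<sigma> \<subseteq> {..<0}"
      "\<forall>f e. sat f e \<sigma> \<longleftrightarrow> f \<in> C"
    using sigma_family[of n] by fastforce
  then show ?thesis by auto
qed

lemma delta_sentence:
  assumes "C \<in> bDelta (Suc n)"
  shows "\<exists>\<sigma>. sentence \<sigma> \<and> DeltaF (Suc n) \<sigma> \<and> (\<forall>f. fval f \<sigma> \<longleftrightarrow> f \<in> C)"
proof -
  have c1: "C \<in> bSigma (Suc n)" using assms unfolding bDelta_def by auto
  have c2: "- C \<in> bSigma (Suc n)" using bDelta_compl[OF assms] unfolding bDelta_def by auto
  obtain \<sigma> where s: "wf_fml \<sigma>" "SigmaF (Suc n) \<sigma>" "fv_fml \<sigma> = {}" "\<forall>f e. sat f e \<sigma> \<longleftrightarrow> f \<in> C"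
    using sigma_sentence[OF c1] by blast
  obtain \<tau> where t: "wf_fml \<tau>" "SigmaF (Suc n) \<tau>" "fv_fml \<tau> = {}" "\<forall>f e. sat f e \<tau> \<longleftrightarrow> f \<in> - C"
    using sigma_sentence[OF c2] by blast
  have "wf_fml (dual \<tau>) \<and> PiF (Suc n) (dual \<tau>) \<and> fml_equiv \<sigma> (dual \<tau>)"
    using t s wf_dual SigmaPi_dual sat_dual unfolding fml_equiv_def by auto
  moreover have "wf_fml \<sigma> \<and> SigmaF (Suc n) \<sigma> \<and> fml_equiv \<sigma> \<sigma>" using s unfolding fml_equiv_def by auto
  ultimately have "DeltaF (Suc n) \<sigma>" by auto
  moreover have "sentence \<sigma>" using s unfolding sentence_def by auto
  ultimately show ?thesis using s unfolding fval_def by auto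
qed

theorem mainTheorem10:
  fixes m :: nat and S :: "(nat \<Rightarrow> nat) set"
  assumes "S \<in> DeltaP (m + 2)"
  shows "guessable m S"
proof (cases m)
  case 0
  have S2: "S \<in> bDelta 2" using assms 0 unfolding DeltaP_def by simp
  have b2: "bSigma 2 = {(\<Union>i::nat. - A i) | A. \<forall>i. open (A i)}"
    by (simp add: numeral_2_eq_2)
  obtain A where A: "\<And>i. open (A i)" "S = (\<Union>i::nat. - A i)"
    using S2 unfolding bDelta_def b2 by blast
  obtain T where T: "S = - T" "T \<in> bSigma 2" using S2 unfolding bDelta_def bPi_def by blast
  obtain B where B: "\<And>i. open (B i)" "T = (\<Union>i::nat. - B i)"
    using T(2) unfolding b2 by blast
  define mk where "mk U j = Eq (GApp 0 (\<lambda>xs ys. if xs = [] \<and> \<not> cyl ys \<subseteq> U then 1 else 0) [] (Cst j)) (Cst 1)"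
    for U j
  have mk_s: "sentence (mk U j) \<and> DeltaF 0 (mk U j)" for U j
    unfolding mk_def sentence_def by auto
  have mk_v: "fval f (mk U j) \<longleftrightarrow> \<not> cyl (map f [0..<Suc j]) \<subseteq> U" for f U j
    unfolding mk_def fval_def by (simp del: upt_Suc)
  have cl: "open U \<Longrightarrow> f \<in> - U \<longleftrightarrow> (\<forall>j. fval f (mk U j))" for U f
    using open_iff_cyl[of U f] mk_v by auto
  show ?thesis unfolding 0
  proof (rule guess_abstract[of "\<lambda>i. mk (A i)" _ "\<lambda>i. mk (B i)"])
    show "\<And>f. f \<in> S \<longleftrightarrow> (\<exists>i. \<forall>j. fval f (mk (A i) j))" unfolding A(2) using cl[OF A(1)] by auto
    show "\<And>f. f \<notin> S \<longleftrightarrow> (\<exists>i. \<forall>j. fval f (mk (B i) j))" unfolding T(1) B(2) using cl[OF B(1)] by auto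
  qed (use mk_s in auto)
next
  case (Suc m')
  have "\<not> m + 2 \<le> 2" using Suc by simp
  then obtain A B where AB: "\<And>i j. A i j \<in> bDelta (Suc m')" "S = (\<Union>i::nat. \<Inter>j::nat. A i j)"
    "\<And>i j. B i j \<in> bDelta (Suc m')" "S = (\<Inter>i::nat. \<Union>j::nat. B i j)"
  proof -
    have "(\<exists>A. (\<forall>i j. A i j \<in> bDelta (m + 2 - 2)) \<and> S = (\<Union>i::nat. \<Inter>j::nat. A i j))
       \<and> (\<exists>B. (\<forall>i j. B i j \<in> bDelta (m + 2 - 2)) \<and> S = (\<Inter>i::nat. \<Union>j::nat. B i j))"
      using assms \<open>\<not> m + 2 \<le> 2\<close> unfolding DeltaP_def by (simp only: if_False mem_Collect_eq)
    moreover have eq: "m + 2 - 2 = Suc m'" using Suc by simp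
    ultimately have h: "(\<exists>A. (\<forall>i j. A i j \<in> bDelta (Suc m')) \<and> S = (\<Union>i::nat. \<Inter>j::nat. A i j))
       \<and> (\<exists>B. (\<forall>i j. B i j \<in> bDelta (Suc m')) \<and> S = (\<Inter>i::nat. \<Union>j::nat. B i j))"
      by (simp only:)
    then obtain A where A1: "\<forall>i j. A i j \<in> bDelta (Suc m')" and A2: "S = (\<Union>i::nat. \<Inter>j::nat. A i j)"
      by blast
    from h obtain B where B1: "\<forall>i j. B i j \<in> bDelta (Suc m')" and B2: "S = (\<Inter>i::nat. \<Union>j::nat. B i j)"
      by blast
    show ?thesis
      apply (rule that[of A B])
      using A1 apply blast
       apply (fact A2)
      using B1 apply blast
      apply (fact B2)
      done
  qed
  have "\<forall>i j. \<exists>\<sigma>. sentence \<sigma> \<and> DeltaF (Suc m') \<sigma> \<and> (\<forall>f. fval f \<sigma> \<longleftrightarrow> f \<in> A i j)"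
    using delta_sentence AB(1) by blast
  then obtain \<alpha> where \<alpha>: "\<And>i j. sentence (\<alpha> i j) \<and> DeltaF (Suc m') (\<alpha> i j) \<and> (\<forall>f. fval f (\<alpha> i j) \<longleftrightarrow> f \<in> A i j)"
    by metis
  have "\<forall>i j. \<exists>\<sigma>. sentence \<sigma> \<and> DeltaF (Suc m') \<sigma> \<and> (\<forall>f. fval f \<sigma> \<longleftrightarrow> f \<in> - B i j)"
    using delta_sentence AB(3) bDelta_compl by blast
  then obtain \<beta> where \<beta>: "\<And>i j. sentence (\<beta> i j) \<and> DeltaF (Suc m') (\<beta> i j) \<and> (\<forall>f. fval f (\<beta> i j) \<longleftrightarrow> f \<in> - B i j)"
    by metis
  show ?thesis unfolding Suc
  proof (rule guess_abstract[of \<alpha> _ \<beta>])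
    show "\<And>f. f \<in> S \<longleftrightarrow> (\<exists>i. \<forall>j. fval f (\<alpha> i j))" unfolding AB(2) using \<alpha> by auto
    show "\<And>f. f \<notin> S \<longleftrightarrow> (\<exists>i. \<forall>j. fval f (\<beta> i j))" unfolding AB(4) using \<beta> by auto
  qed (use \<alpha> \<beta> in auto)
qed

end
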